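(* Let $(A_n)$ be a sequence of sets with $A_n\subseteq[n]$ that are quasi-Sidon, i.e. $|A_n+A_n|=(1+o(1))\binom{|A_n|}{2}$ as $n\to\infty$. Then $$|A_n|\le \left(\left(\frac14+\frac{1}{(\pi+2)^2}\right)^{-1/2}+o(1)\right) n^{1/2}=(1.863\ldots+o(1))\, n^{1/2}.$$
   Context: $[n]=\{1,\dots,n\}$. For a set $A$ of integers, $A+A=\{a+b: a,b\in A\}$. *)

theory Defs
  imports Complex_Main "HOL-Library.Landau_Symbols"
begin

definition sumset :: "nat set \<Rightarrow> nat set" where
  "sumset A = {a + b | a b. a \<in> A \<and> b \<in> A}"

end

theory Submission
  imports Defs
begin


lemma tele_sin:
  fixes x :: real
  shows "2 * sin (x/2) * (\<Sum>u<N. sin (real u * x)) = cos (x/2) - cos ((2 * real N - 1) * x / 2)"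
proof (induction N)
  case 0 then show ?case by simp
next
  case (Suc N)
  have "2 * sin (x/2) * sin (real N * x) = cos ((2 * real N - 1) * x / 2) - cos ((2 * real (Suc N) - 1) * x / 2)"
    by (simp add: sin_times_sin algebra_simps add_divide_distrib diff_divide_distrib)
  then show ?case using Suc by (simp add: algebra_simps)
qed

lemma tele_cos:
  fixes x :: real
  shows "2 * sin (x/2) * (\<Sum>u<N. cos (real u * x)) = sin ((2 * real N - 1) * x / 2) + sin (x/2)"
proof (induction N)
  case 0 then show ?case by simp
next
  case (Suc N)
  have "2 * sin (x/2) * cos (real N * x) = sin ((2 * real (Suc N) - 1) * x / 2) - sin ((2 * real N - 1) * x / 2)"
    by (simp add: sin_add sin_diff algebra_simps add_divide_distrib diff_divide_distrib)
  then show ?case using Suc by (simp add: algebra_simps)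
qed



lemma cos_orth:
  fixes n :: nat and d :: int
  assumes n: "n > 0"
  shows "(\<Sum>m<n. cos (2*pi*real m * of_int d / real n)) = (if int n dvd d then real n else 0)"
proof (cases "int n dvd d")
  case True
  then obtain q where q: "d = int n * q" by (auto simp: dvd_def)
  have "cos (2*pi*real m * of_int d / real n) = 1" for m
  proof -
    have "2*pi*real m * of_int d / real n = (2*pi) * of_int (int m * q)"
      using n by (simp add: q field_simps)
    then show ?thesis by (metis cos_int_2pin)
  qed
  then show ?thesis using True by simp
next
  case False
  let ?x = "2*pi*of_int d / real n"
  have eq: "2 * sin (?x/2) * (\<Sum>m<n. cos (real m * ?x)) = sin ((2 * real n - 1) * ?x / 2) + sin (?x/2)"
    by (rule tele_cos)
  have "(2 * real n - 1) * ?x / 2 = (2*pi) * of_int d - ?x/2"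
    using n by (simp add: field_simps)
  then have "sin ((2 * real n - 1) * ?x / 2) = - sin (?x/2)"
    by (simp add: sin_diff)
  with eq have z: "sin (?x/2) * (\<Sum>m<n. cos (real m * ?x)) = 0" by simp
  have "sin (?x/2) \<noteq> 0"
  proof
    assume "sin (?x/2) = 0"
    then obtain i :: int where "?x/2 = of_int i * pi" by (auto simp: sin_zero_iff_int2)
    then have "of_int d = real n * of_int i" using n by (simp add: field_simps)
    then have "d = int n * i" by (metis of_int_eq_iff of_int_mult of_int_of_nat_eq)
    with False show False by simp
  qed
  with z have "(\<Sum>m<n. cos (real m * ?x)) = 0" by simp
  moreover have "(\<Sum>m<n. cos (2*pi*real m * of_int d / real n)) = (\<Sum>m<n. cos (real m * ?x))"
    by (simp add: field_simps)
  ultimately show ?thesis using False by simp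
qed



lemma sin_sum_odd:
  fixes n q :: nat
  assumes n: "n > 0" and q: "odd q" "q < 2*n"
  shows "(\<Sum>u<n. sin (real u * (pi * real q / real n))) = cos (pi * real q / (2 * real n)) / sin (pi * real q / (2 * real n))"
proof -
  let ?x = "pi * real q / real n"
  have eq: "2 * sin (?x/2) * (\<Sum>u<n. sin (real u * ?x)) = cos (?x/2) - cos ((2 * real n - 1) * ?x / 2)"
    by (rule tele_sin)
  have "(2 * real n - 1) * ?x / 2 = real q * pi - ?x/2"
    using n by (simp add: field_simps)
  moreover have "cos (real q * pi) = -1" using q by simp
  moreover have "sin (real q * pi) = 0" by simp
  ultimately have "cos ((2 * real n - 1) * ?x / 2) = - cos (?x/2)"
    by (simp add: cos_diff)
  with eq have e2: "sin (?x/2) * (\<Sum>u<n. sin (real u * ?x)) = cos (?x/2)" by simp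
  have "0 < ?x/2" using n q by (auto intro!: divide_pos_pos mult_pos_pos simp: odd_pos)
  moreover have "?x/2 < pi" using n q by (simp add: field_simps)
  ultimately have "sin (?x/2) > 0" by (intro sin_gt_zero) auto
  moreover have "?x/2 = pi * real q / (2 * real n)" by simp
  ultimately show ?thesis using e2 by (simp add: field_simps)
qed

definition cc :: "nat \<Rightarrow> nat \<Rightarrow> real" where
  "cc n m = (\<Sum>u<n. sin (pi * real u / real n) * cos (2 * pi * real m * real u / real n))"

lemma cc_0:
  assumes n: "n > 0"
  shows "cc n 0 = cos (pi / (2 * real n)) / sin (pi / (2 * real n))"
proof -
  have "cc n 0 = (\<Sum>u<n. sin (real u * (pi * real 1 / real n)))"
    unfolding cc_def by (simp add: field_simps)
  also have "\<dots> = cos (pi * real 1 / (2 * real n)) / sin (pi * real 1 / (2 * real n))"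
    using n by (intro sin_sum_odd) auto
  finally show ?thesis by simp
qed

lemma cot_mono:
  fixes a b :: real
  assumes "0 < b" "b \<le> a" "a < pi"
  shows "cos a / sin a \<le> cos b / sin b"
proof -
  have sa: "sin a > 0" using assms by (intro sin_gt_zero) auto
  have sb: "sin b > 0" using assms by (intro sin_gt_zero) auto
  have "sin (a - b) \<ge> 0" using assms by (intro sin_ge_zero) auto
  then have "cos a * sin b \<le> cos b * sin a" by (simp add: sin_diff algebra_simps)
  then show ?thesis using sa sb by (simp add: divide_simps algebra_simps)
qed

lemma cc_nonpos:
  assumes n: "n > 0" and m: "1 \<le> m" "m < n"
  shows "cc n m \<le> 0"
proof -
  have "cc n m = (\<Sum>u<n. (sin (real u * (pi * real (2*m+1) / real n)) - sin (real u * (pi * real (2*m-1) / real n))) / 2)"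
    unfolding cc_def
  proof (intro sum.cong refl)
    fix u
    have "sin (pi * real u / real n) * cos (2 * pi * real m * real u / real n)
       = (sin (pi * real u / real n + 2 * pi * real m * real u / real n) + sin (pi * real u / real n - 2 * pi * real m * real u / real n)) / 2"
      by (rule sin_times_cos)
    moreover have "pi * real u / real n + 2 * pi * real m * real u / real n = real u * (pi * real (2*m+1) / real n)"
      using n by (simp add: field_simps)
    moreover have "pi * real u / real n - 2 * pi * real m * real u / real n = - (real u * (pi * real (2*m-1) / real n))"
      using m n by (simp add: field_simps of_nat_diff)
    ultimately show "sin (pi * real u / real n) * cos (2 * pi * real m * real u / real n) = (sin (real u * (pi * real (2*m+1) / real n)) - sin (real u * (pi * real (2*m-1) / real n))) / 2"
      by simp
  qed
  also have "\<dots> = ((\<Sum>u<n. sin (real u * (pi * real (2*m+1) / real n))) - (\<Sum>u<n. sin (real u * (pi * real (2*m-1) / real n)))) / 2"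
    by (simp only: sum_divide_distrib[symmetric] sum_subtractf)
  also have "\<dots> = (cos (pi * real (2*m+1) / (2 * real n)) / sin (pi * real (2*m+1) / (2 * real n))
                 - cos (pi * real (2*m-1) / (2 * real n)) / sin (pi * real (2*m-1) / (2 * real n))) / 2"
    using n m sin_sum_odd[of n "2*m+1"] sin_sum_odd[of n "2*m-1"] by auto
  also have "\<dots> \<le> 0"
  proof -
    have "cos (pi * real (2*m+1) / (2 * real n)) / sin (pi * real (2*m+1) / (2 * real n))
          \<le> cos (pi * real (2*m-1) / (2 * real n)) / sin (pi * real (2*m-1) / (2 * real n))"
    proof (intro cot_mono)
      have "real (2*m+1) < 2 * real n" using m by linarith
      then have "pi * real (2*m+1) < pi * (2 * real n)" by simp
      then show "pi * real (2*m+1) / (2 * real n) < pi" using n by (simp add: field_simps)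
      show "0 < pi * real (2*m-1) / (2 * real n)" using n m by (auto intro!: divide_pos_pos)
      show "pi * real (2*m-1) / (2 * real n) \<le> pi * real (2*m+1) / (2 * real n)"
        using n by (intro divide_right_mono mult_left_mono) auto
    qed
    then show ?thesis by simp
  qed
  finally show ?thesis .
qed



lemma sum_dvd_delta:
  fixes n :: nat and t :: int and f :: "nat \<Rightarrow> real"
  assumes n: "n > 0"
  shows "(\<Sum>u<n. f u * (if int n dvd (int u - t) then 1 else 0)) = f (nat (t mod int n))"
proof -
  have iff: "int n dvd (int u - t) \<longleftrightarrow> u = nat (t mod int n)" if "u < n" for u
  proof -
    have "int n dvd (int u - t) \<longleftrightarrow> int u mod int n = t mod int n"
      by (simp add: mod_eq_dvd_iff)
    also have "int u mod int n = int u" using that by simp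
    also have "(int u = t mod int n) \<longleftrightarrow> u = nat (t mod int n)"
      using n by auto
    finally show ?thesis .
  qed
  have "(\<Sum>u<n. f u * (if int n dvd (int u - t) then 1 else 0)) = (\<Sum>u<n. if u = nat (t mod int n) then f u else 0)"
    by (intro sum.cong refl) (simp add: iff)
  also have "\<dots> = f (nat (t mod int n))"
  proof -
    have "nat (t mod int n) < n" using n by (simp add: nat_less_iff)
    then show ?thesis by (simp add: sum.delta)
  qed
  finally show ?thesis .
qed

lemma sin_mod_abs:
  fixes n :: nat and t :: int
  assumes n: "n > 0"
  shows "sin (pi * real (nat (t mod int n)) / real n) = \<bar>sin (pi * of_int t / real n)\<bar>"
proof -
  define q where "q = t div int n"
  define r where "r = t mod int n"
  have r0: "0 \<le> r" and rn: "r < int n" using n by (auto simp: r_def)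
  have t: "t = int n * q + r" by (simp add: q_def r_def)
  have "pi * of_int t / real n = pi * of_int q + pi * of_int r / real n"
    using n by (simp add: t field_simps)
  then have "sin (pi * of_int t / real n) = cos (pi * of_int q) * sin (pi * of_int r / real n)"
    by (simp add: sin_add)
  then have "\<bar>sin (pi * of_int t / real n)\<bar> = \<bar>sin (pi * of_int r / real n)\<bar>"
    by (simp add: abs_mult)
  also have "sin (pi * of_int r / real n) \<ge> 0"
    using n r0 rn by (intro sin_ge_zero) (auto simp: field_simps)
  then have "\<bar>sin (pi * of_int r / real n)\<bar> = sin (pi * of_int r / real n)" by simp
  finally show ?thesis using r0 by (simp add: r_def)
qed

lemma cc_inversion:
  fixes n :: nat and t :: int
  assumes n: "n > 0"
  shows "(\<Sum>m<n. cc n m * cos (2 * pi * real m * of_int t / real n)) = real n * \<bar>sin (pi * of_int t / real n)\<bar>"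
proof -
  have "(\<Sum>m<n. cc n m * cos (2 * pi * real m * of_int t / real n))
      = (\<Sum>m<n. \<Sum>u<n. sin (pi * real u / real n) * (cos (2 * pi * real m * real u / real n) * cos (2 * pi * real m * of_int t / real n)))"
    unfolding cc_def by (simp add: sum_distrib_right mult.assoc)
  also have "\<dots> = (\<Sum>u<n. sin (pi * real u / real n) * (\<Sum>m<n. (cos (2*pi*real m * of_int (int u - t) / real n) + cos (2*pi*real m * of_int (int u + t) / real n)) / 2))"
    apply (subst sum.swap)
    apply (simp add: sum_distrib_left cos_times_cos)
    apply (intro sum.cong refl)
    apply (simp add: algebra_simps add_divide_distrib diff_divide_distrib)
    done
  also have "\<dots> = (\<Sum>u<n. sin (pi * real u / real n) * (real n / 2) * ((if int n dvd (int u - t) then 1 else 0) + (if int n dvd (int u - (-t)) then 1 else 0)))"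
  proof (intro sum.cong refl)
    fix u
    have o1: "(\<Sum>m<n. cos (2*pi*real m * of_int (int u - t) / real n)) = (if int n dvd (int u - t) then real n else 0)"
      using n by (rule cos_orth)
    have o2: "(\<Sum>m<n. cos (2*pi*real m * of_int (int u - (-t)) / real n)) = (if int n dvd (int u - (-t)) then real n else 0)"
      using n by (rule cos_orth)
    have "(\<Sum>m<n. (cos (2*pi*real m * of_int (int u - t) / real n) + cos (2*pi*real m * of_int (int u + t) / real n)) / 2)
       = ((\<Sum>m<n. cos (2*pi*real m * of_int (int u - t) / real n)) + (\<Sum>m<n. cos (2*pi*real m * of_int (int u - (-t)) / real n))) / 2"
      by (simp only: sum_divide_distrib[symmetric] sum.distrib diff_minus_eq_add)
    also have "\<dots> = (real n / 2) * ((if int n dvd (int u - t) then 1 else 0) + (if int n dvd (int u - (-t)) then 1 else 0))"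
      by (simp only: o1 o2) simp
    finally show "sin (pi * real u / real n) * (\<Sum>m<n. (cos (2*pi*real m * of_int (int u - t) / real n) + cos (2*pi*real m * of_int (int u + t) / real n)) / 2)
      = sin (pi * real u / real n) * (real n / 2) * ((if int n dvd (int u - t) then 1 else 0) + (if int n dvd (int u - (-t)) then 1 else 0))"
      by simp
  qed
  also have "\<dots> = (\<Sum>u<n. (sin (pi * real u / real n) * (real n / 2)) * (if int n dvd (int u - t) then 1 else 0))
                + (\<Sum>u<n. (sin (pi * real u / real n) * (real n / 2)) * (if int n dvd (int u - (-t)) then 1 else 0))"
    by (simp add: distrib_left sum.distrib)
  also have "\<dots> = sin (pi * real (nat (t mod int n)) / real n) * (real n / 2) + sin (pi * real (nat ((-t) mod int n)) / real n) * (real n / 2)"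
    using n by (simp only: sum_dvd_delta)
  also have "\<dots> = real n * \<bar>sin (pi * of_int t / real n)\<bar>"
  proof -
    have "sin (pi * real (nat ((-t) mod int n)) / real n) = \<bar>sin (pi * of_int (-t) / real n)\<bar>"
      using n by (rule sin_mod_abs)
    also have "\<dots> = \<bar>sin (pi * of_int t / real n)\<bar>" by simp
    finally show ?thesis using sin_mod_abs[OF n, of t] by (simp add: field_simps)
  qed
  finally show ?thesis .
qed



lemma sum_split0:
  fixes f :: "nat \<Rightarrow> real"
  assumes "n > 0"
  shows "(\<Sum>m<n. f m) = f 0 + (\<Sum>m\<in>{1..<n}. f m)"
proof -
  have "{..<n} = insert 0 {1..<n}" using assms by auto
  then show ?thesis by simp
qed

lemma fourier_key:
  fixes A :: "nat set" and n :: nat and R :: real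
  assumes n: "n > 0" and A: "A \<subseteq> {1..n}"
    and bound: "\<And>j. 1 \<le> j \<Longrightarrow> j < 2*n \<Longrightarrow> cmod (\<Sum>a\<in>A. cis (pi * real j * real a / real n)) \<le> R"
  shows "(cc n 0 / real n) * real (card A) \<le> R * (1 + cc n 0 / real n)"
proof -
  have finA: "finite A" using A finite_subset by blast
  let ?W = "\<lambda>j. (\<Sum>a\<in>A. cis (pi * real j * real a / real n))"
  have s1: "(\<Sum>a\<in>A. sin (pi * real a / real n)) \<le> R"
  proof -
    have "(\<Sum>a\<in>A. sin (pi * real a / real n)) = Im (?W 1)"
      by (simp add: Im_sum)
    also have "\<dots> \<le> cmod (?W 1)" using abs_Im_le_cmod abs_le_D1 by blast
    also have "\<dots> \<le> R" using n by (intro bound) auto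
    finally show ?thesis .
  qed
  have inv: "real n * sin (pi * real a / real n) = (\<Sum>m<n. cc n m * cos (2 * pi * real m * real a / real n))"
    if "a \<in> A" for a
  proof -
    have "(\<Sum>m<n. cc n m * cos (2 * pi * real m * of_int (int a) / real n)) = real n * \<bar>sin (pi * of_int (int a) / real n)\<bar>"
      using n by (rule cc_inversion)
    moreover have "sin (pi * real a / real n) \<ge> 0"
      using that A n by (intro sin_ge_zero) (auto simp: field_simps)
    ultimately show ?thesis by simp
  qed
  have sum0: "(\<Sum>m<n. cc n m) = 0"
    using cc_inversion[OF n, of 0] by simp
  have "real n * (\<Sum>a\<in>A. sin (pi * real a / real n)) = (\<Sum>a\<in>A. \<Sum>m<n. cc n m * cos (2 * pi * real m * real a / real n))"
    by (simp add: sum_distrib_left inv)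
  also have "\<dots> = (\<Sum>m<n. cc n m * (\<Sum>a\<in>A. cos (2 * pi * real m * real a / real n)))"
    by (subst sum.swap) (simp add: sum_distrib_left)
  also have "\<dots> = cc n 0 * real (card A) + (\<Sum>m\<in>{1..<n}. cc n m * (\<Sum>a\<in>A. cos (2 * pi * real m * real a / real n)))"
    using n by (simp add: sum_split0)
  also have "\<dots> \<ge> cc n 0 * real (card A) + (\<Sum>m\<in>{1..<n}. cc n m * R)"
  proof -
    have "cc n m * (\<Sum>a\<in>A. cos (2 * pi * real m * real a / real n)) \<ge> cc n m * R" if m: "m \<in> {1..<n}" for m
    proof -
      have "(\<Sum>a\<in>A. cos (2 * pi * real m * real a / real n)) = Re (?W (2*m))"
        by (simp add: Re_sum mult_ac)
      also have "\<dots> \<le> cmod (?W (2*m))" by (rule complex_Re_le_cmod)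
      also have "\<dots> \<le> R" using m by (intro bound) auto
      finally have "(\<Sum>a\<in>A. cos (2 * pi * real m * real a / real n)) \<le> R" .
      moreover have "cc n m \<le> 0" using m n by (intro cc_nonpos) auto
      ultimately show ?thesis by (simp add: mult_left_mono_neg)
    qed
    then show ?thesis by (intro add_left_mono sum_mono) auto
  qed
  finally have ge: "cc n 0 * real (card A) + (\<Sum>m\<in>{1..<n}. cc n m * R) \<le> real n * (\<Sum>a\<in>A. sin (pi * real a / real n))" .
  have "real n * (\<Sum>a\<in>A. sin (pi * real a / real n)) \<le> real n * R" using s1 by (simp add: mult_left_mono)
  moreover have "(\<Sum>m\<in>{1..<n}. cc n m * R) = R * (\<Sum>m\<in>{1..<n}. cc n m)" by (simp add: sum_distrib_left mult.commute)
  ultimately have ineq: "cc n 0 * real (card A) + R * (\<Sum>m\<in>{1..<n}. cc n m) \<le> real n * R" using ge by linarith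
  have "(\<Sum>m\<in>{1..<n}. cc n m) = - cc n 0" using sum0 sum_split0[OF n, of "cc n"] by simp
  with ineq have "cc n 0 * real (card A) \<le> real n * R + R * cc n 0" by simp
  then show ?thesis using n by (simp add: field_simps)
qed



lemma geom_zero:
  fixes n j :: nat
  assumes n: "n > 0" and j: "1 \<le> j" "j < 2*n"
  shows "(\<Sum>s\<in>{2..2*n}. cis (pi * real j / real n) ^ s) = - cis (pi * real j / real n)"
proof -
  let ?z = "cis (pi * real j / real n)"
  have z2n: "?z ^ (2*n) = 1"
  proof -
    have "?z ^ (2*n) = cis (real (2*n) * (pi * real j / real n))" by (rule DeMoivre)
    also have "real (2*n) * (pi * real j / real n) = 2 * pi * real j" using n by (simp add: field_simps)
    also have "cis (2 * pi * real j) = 1" by (rule cis_multiple_2pi) simp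
    finally show ?thesis .
  qed
  have z1: "?z \<noteq> 1"
  proof
    assume "?z = 1"
    then have "cos (pi * real j / real n) = 1" by (metis cis.sel(1) one_complex.simps(1))
    then obtain i :: int where i: "pi * real j / real n = of_int i * 2 * pi" by (auto simp: cos_one_2pi_int)
    then have "real j = real n * 2 * of_int i" using n by (simp add: field_simps)
    then have "real_of_int (int j) = real_of_int (int n * 2 * i)" by simp
    then have ji: "int j = int n * 2 * i" by (simp only: of_int_eq_iff)
    show False
    proof (cases "i \<le> 0")
      case True
      then have "int n * 2 * i \<le> 0" by (simp add: mult_nonneg_nonpos)
      with ji j show False by simp
    next
      case False
      then have "i \<ge> 1" by simp
      then have "int n * 2 * i \<ge> int n * 2 * 1" by (intro mult_left_mono) auto
      with ji j show False by simp
    qed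
  qed
  have g: "(\<Sum>s<2*n. ?z ^ s) = 0" using z1 z2n by (simp add: sum_gp_strict)
  have "(\<Sum>s\<le>2*n. ?z ^ s) = (\<Sum>s<2*n. ?z ^ s) + ?z ^ (2*n)"
    by (simp add: lessThan_Suc_atMost[symmetric])
  also have "\<dots> = 1" using g z2n by simp
  finally have a: "(\<Sum>s\<le>2*n. ?z ^ s) = 1" .
  have "{..2*n} = insert 0 (insert 1 {2..2*n})" using n by auto
  then have "(\<Sum>s\<le>2*n. ?z ^ s) = 1 + ?z + (\<Sum>s\<in>{2..2*n}. ?z ^ s)" by simp
  with a have "?z + (\<Sum>s\<in>{2..2*n}. ?z ^ s) = 0" by simp
  then show ?thesis by (simp add: eq_neg_iff_add_eq_0 add.commute)
qed



lemma sumset_image: "sumset A = (\<lambda>p. fst p + snd p) ` (A \<times> A)"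
  unfolding sumset_def by force

lemma sumset_bound:
  fixes A :: "nat set" and n j :: nat
  assumes n: "n > 0" and A: "A \<subseteq> {1..n}" and j: "1 \<le> j" "j < 2*n"
  shows "(cmod (\<Sum>a\<in>A. cis (pi * real j * real a / real n)))^2
         \<le> 4 * real n + real (card A)^2 - 4 * real (card (sumset A)) + 2 * real (card A)"
proof -
  let ?z = "cis (pi * real j / real n)"
  let ?S = "sumset A"
  let ?k = "card A"
  define r where "r s = card {p \<in> A \<times> A. fst p + snd p = s}" for s
  have finA: "finite A" using A finite_subset by blast
  have finAA: "finite (A \<times> A)" using finA by simp
  have finS: "finite ?S" unfolding sumset_image using finAA by simp
  have Ssub: "?S \<subseteq> {2..2*n}"
  proof
    fix s assume "s \<in> ?S"
    then obtain a b where ab: "a \<in> A" "b \<in> A" "s = a + b" unfolding sumset_def by auto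
    with A have "a \<in> {1..n}" "b \<in> {1..n}" by auto
    then show "s \<in> {2..2*n}" using ab by auto
  qed
  have W: "(\<Sum>a\<in>A. cis (pi * real j * real a / real n)) = (\<Sum>a\<in>A. ?z ^ a)"
    by (intro sum.cong refl) (simp add: DeMoivre mult_ac)
  have W2: "(\<Sum>a\<in>A. ?z ^ a)^2 = (\<Sum>p\<in>A \<times> A. ?z ^ (fst p + snd p))"
    by (simp add: power2_eq_square sum_product sum.cartesian_product power_add case_prod_beta)
  have grp: "(\<Sum>p\<in>A \<times> A. ?z ^ (fst p + snd p)) = (\<Sum>s\<in>?S. of_nat (r s) * ?z ^ s)"
  proof -
    have "(\<Sum>p\<in>A \<times> A. ?z ^ (fst p + snd p)) = (\<Sum>s\<in>(\<lambda>p. fst p + snd p) ` (A \<times> A). \<Sum>p\<in>{p\<in>A \<times> A. fst p + snd p = s}. ?z ^ (fst p + snd p))"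
      using finAA by (rule sum.image_gen)
    also have "\<dots> = (\<Sum>s\<in>?S. of_nat (r s) * ?z ^ s)"
      unfolding sumset_image r_def by (intro sum.cong refl) simp
    finally show ?thesis .
  qed
  have cnt: "(\<Sum>s\<in>?S. r s) = ?k^2"
  proof -
    have "card (A \<times> A) = (\<Sum>p\<in>A \<times> A. 1)" by simp
    also have "\<dots> = (\<Sum>s\<in>(\<lambda>p. fst p + snd p) ` (A \<times> A). \<Sum>p\<in>{p\<in>A \<times> A. fst p + snd p = s}. 1)"
      using finAA by (rule sum.image_gen)
    also have "\<dots> = (\<Sum>s\<in>?S. r s)" unfolding sumset_image r_def by simp
    finally show ?thesis by (simp add: card_cartesian_product power2_eq_square)
  qed
  define D where "D = (\<lambda>a. 2*a) ` A"
  have rpos: "r s \<ge> 1" if "s \<in> ?S" for s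
  proof -
    from that obtain a b where "a \<in> A" "b \<in> A" "s = a + b" unfolding sumset_def by auto
    then have "(a,b) \<in> {p \<in> A \<times> A. fst p + snd p = s}" by simp
    moreover have "finite {p \<in> A \<times> A. fst p + snd p = s}" using finAA by simp
    ultimately show ?thesis unfolding r_def by (metis One_nat_def Suc_leI card_gt_0_iff empty_iff)
  qed
  have r1: "s \<in> D" if "s \<in> ?S" "r s = 1" for s
  proof -
    from that(2) obtain p where p: "{p \<in> A \<times> A. fst p + snd p = s} = {p}" unfolding r_def by (rule card_1_singletonE)
    obtain a b where ab: "p = (a,b)" by (cases p)
    have "p \<in> {p \<in> A \<times> A. fst p + snd p = s}" by (simp only: p) simp
    then have abin: "(a,b) \<in> {p \<in> A \<times> A. fst p + snd p = s}" by (simp only: ab)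
    then have "a \<in> A" "b \<in> A" "a + b = s" by simp_all
    have ba: "b + a = s" using \<open>a + b = s\<close> by (simp only: add.commute)
    have "(b,a) \<in> {p \<in> A \<times> A. fst p + snd p = s}" unfolding mem_Collect_eq mem_Sigma_iff fst_conv snd_conv using \<open>a \<in> A\<close> \<open>b \<in> A\<close> ba by blast
    then have "(b,a) \<in> {p}" by (simp only: p)
    then have "(b,a) = p" by (rule singletonD)
    then have "a = b" using ab by (metis prod.inject)
    then have "s = 2 * a" using \<open>a + b = s\<close> by linarith
    then show ?thesis unfolding D_def using \<open>a \<in> A\<close> by blast
  qed
  have absr: "\<bar>real (r s) - 2\<bar> \<le> real (r s) - 2 + 2 * (if s \<in> D then 1 else 0)" if "s \<in> ?S" for s
  proof (cases "r s = 1")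
    case True
    then show ?thesis using r1[OF that True] by simp
  next
    case False
    then have "r s \<ge> 2" using rpos[OF that] by linarith
    then have "real (r s) \<ge> 2" by simp
    then show ?thesis by simp
  qed
  have cardD: "card (?S \<inter> D) \<le> ?k"
  proof -
    have "card (?S \<inter> D) \<le> card D" unfolding D_def using finA by (intro card_mono) auto
    also have "\<dots> \<le> ?k" unfolding D_def using card_image_le finA by blast
    finally show ?thesis .
  qed
  have sumabs: "(\<Sum>s\<in>?S. \<bar>real (r s) - 2\<bar>) \<le> real ?k ^ 2 - 2 * real (card ?S) + 2 * real ?k"
  proof -
    have "(\<Sum>s\<in>?S. \<bar>real (r s) - 2\<bar>) \<le> (\<Sum>s\<in>?S. real (r s) - 2 + 2 * (if s \<in> D then 1 else 0))"
      by (intro sum_mono absr)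
    also have "\<dots> = (\<Sum>s\<in>?S. real (r s)) - 2 * real (card ?S) + 2 * real (card (?S \<inter> D))"
      using finS by (simp add: sum.distrib sum_subtractf sum_distrib_left[symmetric] sum.If_cases Int_commute)
    also have "(\<Sum>s\<in>?S. real (r s)) = real ?k ^ 2" using cnt by (metis of_nat_power of_nat_sum)
    finally show ?thesis using cardD by linarith
  qed
  have split: "(\<Sum>s\<in>?S. of_nat (r s) * ?z ^ s) = (\<Sum>s\<in>?S. (of_nat (r s) - 2) * ?z ^ s) + 2 * (\<Sum>s\<in>?S. ?z ^ s)"
    by (simp add: algebra_simps sum.distrib sum_subtractf sum_distrib_left)
  have n1: "cmod (\<Sum>s\<in>?S. (of_nat (r s) - 2) * ?z ^ s) \<le> (\<Sum>s\<in>?S. \<bar>real (r s) - 2\<bar>)"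
  proof -
    have "cmod (\<Sum>s\<in>?S. (of_nat (r s) - 2) * ?z ^ s) \<le> (\<Sum>s\<in>?S. cmod ((of_nat (r s) - 2) * ?z ^ s))"
      by (rule norm_sum)
    also have "\<dots> = (\<Sum>s\<in>?S. \<bar>real (r s) - 2\<bar>)"
    proof (intro sum.cong refl)
      fix s
      have "(of_nat (r s) - 2 :: complex) = of_real (real (r s) - 2)" by simp
      then show "cmod ((of_nat (r s) - 2) * ?z ^ s) = \<bar>real (r s) - 2\<bar>"
        by (simp only: norm_mult norm_power norm_cis norm_of_real) simp
    qed
    finally show ?thesis .
  qed
  have n2: "cmod (\<Sum>s\<in>?S. ?z ^ s) \<le> 1 + (2 * real n - 1 - real (card ?S))"
  proof -
    have fI: "finite {2..2*n}" by simp
    have "(\<Sum>s\<in>?S. ?z ^ s) = (\<Sum>s\<in>{2..2*n}. ?z ^ s) - (\<Sum>s\<in>{2..2*n} - ?S. ?z ^ s)"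
      using Ssub fI by (simp add: sum_diff)
    also have "\<dots> = - ?z - (\<Sum>s\<in>{2..2*n} - ?S. ?z ^ s)" using geom_zero[OF n j] by simp
    finally have e: "(\<Sum>s\<in>?S. ?z ^ s) = - ?z - (\<Sum>s\<in>{2..2*n} - ?S. ?z ^ s)" .
    have "cmod (\<Sum>s\<in>{2..2*n} - ?S. ?z ^ s) \<le> (\<Sum>s\<in>{2..2*n} - ?S. cmod (?z ^ s))" by (rule norm_sum)
    also have "\<dots> = real (card ({2..2*n} - ?S))" by (simp add: norm_power)
    also have "card ({2..2*n} - ?S) = card {2..2*n} - card ?S" using Ssub finS by (simp add: card_Diff_subset)
    also have "real (card {2..2*n} - card ?S) = 2 * real n - 1 - real (card ?S)"
    proof -
      have "card ?S \<le> card {2..2*n}" using Ssub by (intro card_mono) auto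
      moreover have "card {2..2*n} = 2*n - 1" by simp
      ultimately show ?thesis using n by (simp add: of_nat_diff)
    qed
    finally have "cmod (\<Sum>s\<in>{2..2*n} - ?S. ?z ^ s) \<le> 2 * real n - 1 - real (card ?S)" .
    then show ?thesis using e norm_triangle_ineq4[of "- ?z" "(\<Sum>s\<in>{2..2*n} - ?S. ?z ^ s)"] by simp
  qed
  let ?X = "(\<Sum>s\<in>?S. (of_nat (r s) - 2) * ?z ^ s)"
  let ?Y = "(\<Sum>s\<in>?S. ?z ^ s)"
  have "(cmod (\<Sum>a\<in>A. cis (pi * real j * real a / real n)))^2 = cmod ((\<Sum>a\<in>A. ?z ^ a)^2)"
    by (simp only: W norm_power)
  also have "(\<Sum>a\<in>A. ?z ^ a)^2 = ?X + 2 * ?Y"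
    by (simp only: W2 grp split)
  also have "cmod (?X + 2 * ?Y) \<le> cmod ?X + cmod (2 * ?Y)"
    by (rule norm_triangle_ineq)
  also have "cmod (2 * ?Y) = 2 * cmod ?Y" by (simp add: norm_mult)
  finally have "(cmod (\<Sum>a\<in>A. cis (pi * real j * real a / real n)))^2 \<le> cmod ?X + 2 * cmod ?Y" .
  then show ?thesis using n1 n2 sumabs by linarith
qed



lemma gamma_bounds:
  assumes n: "n > 0"
  shows "cc n 0 / real n \<ge> 0" "cc n 0 / real n \<ge> 2/pi - pi / (4 * real n ^ 2)"
proof -
  let ?x = "pi / (2 * real n)"
  have x0: "0 < ?x" using n by simp
  have x1: "?x \<le> pi/2" using n by (simp add: field_simps)
  have sx: "sin ?x > 0" using x0 x1 by (intro sin_gt_zero) auto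
  have sxle: "sin ?x \<le> ?x" using x0 by (intro sin_x_le_x) simp
  have cx0: "cos ?x \<ge> 0" using x0 x1 by (intro cos_ge_zero) auto
  have cxlow: "cos ?x \<ge> 1 - ?x^2/2"
  proof -
    have "cos ?x = 1 - 2 * sin (?x/2)^2" using cos_double_sin[of "?x/2"] by simp
    moreover have "\<bar>sin (?x/2)\<bar> \<le> \<bar>?x/2\<bar>" by (rule abs_sin_x_le_abs_x)
    then have "sin (?x/2)^2 \<le> (?x/2)^2" by (metis abs_le_square_iff)
    ultimately show ?thesis by (simp add: power_divide)
  qed
  have cc0: "cc n 0 = cos ?x / sin ?x" using cc_0[OF n] .
  have "cos ?x / sin ?x \<ge> cos ?x / ?x"
  proof (rule divide_left_mono)
    show "sin ?x \<le> ?x" by (rule sxle)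
    show "0 \<le> cos ?x" by (rule cx0)
    show "0 < ?x * sin ?x" using x0 sx by (rule mult_pos_pos)
  qed
  moreover have "cos ?x / ?x \<ge> (1 - ?x^2/2) / ?x" using cxlow x0 by (intro divide_right_mono) auto
  ultimately have "cc n 0 \<ge> (1 - ?x^2/2) / ?x" using cc0 by linarith
  moreover have "(1 - ?x^2/2) / ?x / real n = 2/pi - pi / (4 * real n ^ 2)"
    using n by (simp add: field_simps power2_eq_square)
  ultimately show "cc n 0 / real n \<ge> 2/pi - pi / (4 * real n ^ 2)"
    using n by (metis divide_right_mono of_nat_0_le_iff)
  show "cc n 0 / real n \<ge> 0" using cc0 sx cx0 n by simp
qed

lemma choose2_real: "2 * real (k choose 2) = real k * (real k - 1)"
proof (induction k)
  case 0 then show ?case by simp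
next
  case (Suc k)
  have "Suc k choose 2 = k + (k choose 2)"
    by (simp add: numeral_2_eq_2)
  then have "real (Suc k choose 2) = real k + real (k choose 2)" by simp
  then show ?case using Suc by (simp add: algebra_simps)
qed

lemma per_n:
  fixes A :: "nat set" and n :: nat
  assumes n: "n > 0" and A: "A \<subseteq> {1..n}"
  shows "((cc n 0 / real n) / (1 + cc n 0 / real n))^2 * real (card A)^2
         \<le> 4 * real n + real (card A)^2 - 4 * real (card (sumset A)) + 2 * real (card A)"
proof -
  let ?g = "cc n 0 / real n"
  let ?Q = "4 * real n + real (card A)^2 - 4 * real (card (sumset A)) + 2 * real (card A)"
  have g0: "?g \<ge> 0" using gamma_bounds[OF n] by simp
  have bnd: "cmod (\<Sum>a\<in>A. cis (pi * real j * real a / real n)) \<le> sqrt ?Q" if "1 \<le> j" "j < 2*n" for j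
    using sumset_bound[OF n A that] by (intro real_le_rsqrt)
  have "(cmod (\<Sum>a\<in>A. cis (pi * real 1 * real a / real n)))^2 \<le> ?Q"
    using n by (intro sumset_bound[OF n A]) auto
  then have Q0: "?Q \<ge> 0" by (meson order_trans zero_le_power2)
  have key: "?g * real (card A) \<le> sqrt ?Q * (1 + ?g)"
    using fourier_key[OF n A bnd] by simp
  have "?g / (1 + ?g) * real (card A) = (?g * real (card A)) / (1 + ?g)" by simp
  also have "\<dots> \<le> sqrt ?Q" using key g0 by (subst pos_divide_le_eq) auto
  finally have "?g / (1 + ?g) * real (card A) \<le> sqrt ?Q" .
  moreover have "?g / (1 + ?g) * real (card A) \<ge> 0"
  proof -
    have g1: "1 + ?g > 0" using g0 by linarith
    show ?thesis by (rule mult_nonneg_nonneg[OF divide_nonneg_pos[OF g0 g1]]) simp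
  qed
  ultimately have "(?g / (1 + ?g) * real (card A))^2 \<le> (sqrt ?Q)^2"
    by (intro power_mono) auto
  also have "(sqrt ?Q)^2 = ?Q" using Q0 by simp
  finally show ?thesis by (simp only: power_mult_distrib)
qed

lemma frac_le1: "(x::real) \<ge> 0 \<Longrightarrow> x / (1 + x) \<le> 1"
  by (simp add: divide_le_eq)

lemma rho_lower:
  fixes g t :: real
  assumes g0: "g \<ge> 0" and gt: "g \<ge> 2/pi - t" and t0: "t \<ge> 0"
  shows "(g / (1 + g))^2 \<ge> (2 / (pi + 2))^2 - 2 * t"
proof -
  let ?gs = "2/pi :: real"
  have rs: "2 / (pi + 2) = ?gs / (1 + ?gs)" by (simp add: field_simps)
  have gs0: "?gs \<ge> 0" by simp
  show ?thesis
  proof (cases "g \<ge> ?gs")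
    case True
    have "?gs / (1 + ?gs) \<le> g / (1 + g)"
    proof -
      have e1: "?gs * (1 + g) = ?gs + ?gs * g" by (simp only: distrib_left mult_1_right)
      have e2: "g * (1 + ?gs) = g + g * ?gs" by (simp only: distrib_left mult_1_right)
      have e3: "g * ?gs = ?gs * g" by (rule mult.commute)
      have "?gs * (1 + g) \<le> g * (1 + ?gs)" unfolding e1 e2 e3 using True by linarith
      moreover have "pi + 2 > 0" using pi_gt_zero by linarith
      ultimately show ?thesis using g0 gs0 by (simp add: divide_simps)
    qed
    moreover have "?gs / (1 + ?gs) \<ge> 0" using gs0 by simp
    ultimately have "(?gs / (1 + ?gs))^2 \<le> (g / (1 + g))^2" by (intro power_mono) auto
    then show ?thesis using rs t0 by simp
  next
    case False
    have d: "?gs / (1 + ?gs) - g / (1 + g) = (?gs - g) / ((1 + ?gs) * (1 + g))"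
    proof -
      have "?gs / (1 + ?gs) - g / (1 + g) = (?gs * (1 + g) - g * (1 + ?gs)) / ((1 + ?gs) * (1 + g))"
        by (rule diff_frac_eq) (use g0 gs0 in linarith)+
      also have "?gs * (1 + g) - g * (1 + ?gs) = ?gs - g"
      proof -
        have e1: "?gs * (1 + g) = ?gs + ?gs * g" by (simp only: distrib_left mult_1_right)
        have e2: "g * (1 + ?gs) = g + g * ?gs" by (simp only: distrib_left mult_1_right)
        have e3: "g * ?gs = ?gs * g" by (rule mult.commute)
        show ?thesis unfolding e1 e2 e3 by linarith
      qed
      finally show ?thesis .
    qed
    have "(?gs - g) / ((1 + ?gs) * (1 + g)) \<le> (?gs - g)"
    proof -
      have "(1 + ?gs) * (1 + g) \<ge> 1" using g0 gs0 by (smt (verit) mult_le_cancel_left1)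
      moreover have "?gs - g \<ge> 0" using False by simp
      ultimately show ?thesis by (simp add: divide_le_eq mult_le_cancel_left1)
    qed
    then have diff: "?gs / (1 + ?gs) - g / (1 + g) \<le> t" using d gt by linarith
    have a1: "?gs / (1 + ?gs) \<le> 1" using gs0 by (rule frac_le1)
    have b1: "g / (1 + g) \<le> 1" using g0 by simp
    have b0: "g / (1 + g) \<ge> 0" using g0 by simp
    have "(?gs / (1 + ?gs))^2 - (g / (1 + g))^2 = (?gs / (1 + ?gs) - g / (1 + g)) * (?gs / (1 + ?gs) + g / (1 + g))"
      by (simp add: power2_eq_square algebra_simps)
    also have "\<dots> \<le> t * 2"
    proof (rule mult_mono)
      show "?gs / (1 + ?gs) - g / (1 + g) \<le> t" by (rule diff)
      show "?gs / (1 + ?gs) + g / (1 + g) \<le> 2" using a1 b1 by linarith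
      show "0 \<le> t" by (rule t0)
      show "0 \<le> ?gs / (1 + ?gs) + g / (1 + g)" using b0 gs0 by simp
    qed
    finally show ?thesis using rs by simp
  qed
qed

lemma final_arith:
  fixes k n r rs d g D :: real
  assumes main: "r^2 * k^2 \<le> 4 * n - (1 - 2*d) * k^2 + 4 * k"
    and r: "r^2 \<ge> rs^2 - g/4" and dg: "d \<le> g/8" and gD: "4 / D + g = 1 + rs^2"
    and g: "g > 0" and D: "D > 0" and big: "16 / g \<le> sqrt D * sqrt n"
    and k: "k \<ge> 0" and n: "n \<ge> 0"
  shows "k \<le> sqrt D * sqrt n"
proof (cases "k \<ge> 16 / g")
  case False then show ?thesis using big by linarith
next
  case True
  then have "k * g \<ge> 16" using g by (simp add: field_simps)
  then have "16 * k \<le> (k * g) * k" using k by (intro mult_right_mono) auto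
  then have "4 * k \<le> (g/4) * k^2" by (simp add: power2_eq_square algebra_simps)
  with main have "(1 + r^2 - 2*d - g/4) * k^2 \<le> 4 * n" by (simp add: algebra_simps)
  moreover have "1 + r^2 - 2*d - g/4 \<ge> 4 / D" using r dg gD g by linarith
  ultimately have "(4 / D) * k^2 \<le> 4 * n"
    by (smt (verit) mult_right_mono zero_le_power2)
  then have "k^2 \<le> D * n" using D by (simp add: field_simps)
  then have "sqrt (k^2) \<le> sqrt (D * n)" by (rule real_sqrt_le_mono)
  then show ?thesis using k by (simp add: real_sqrt_mult)
qed



lemma C_sq:
  defines "x \<equiv> 1/4 + 1/(pi + 2)^2"
  shows "(x powr (-1/2))^2 = 4 / (1 + (2/(pi+2))^2)" "x powr (-1/2) > 0"
proof -
  have x0: "x > 0" unfolding x_def by (simp add: add_pos_nonneg)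
  have "(x powr (-1/2))^2 = x powr (-1/2) * x powr (-1/2)" by (simp add: power2_eq_square)
  also have "\<dots> = x powr (-1/2 + -1/2)" by (rule powr_add[symmetric])
  also have "-1/2 + -1/2 = (-1 :: real)" by simp
  also have "x powr (-1) = inverse x" using x0 by (simp add: powr_minus)
  also have "inverse x = 4 / (1 + (2/(pi+2))^2)"
  proof -
    have "1 + (2/(pi+2))^2 = 4 * x" unfolding x_def by (simp add: power_divide)
    then show ?thesis using x0 by (simp add: field_simps)
  qed
  finally show "(x powr (-1/2))^2 = 4 / (1 + (2/(pi+2))^2)" .
  show "x powr (-1/2) > 0" using x0 by simp
qed

theorem theorem3:
  fixes A :: "nat \<Rightarrow> nat set"
  assumes sub: "\<And>n. A n \<subseteq> {1..n}"
    and quasi_sidon: "(\<lambda>n. real (card (sumset (A n)))) \<sim>[at_top] (\<lambda>n. real (card (A n) choose 2))"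
  shows "\<forall>\<epsilon>>0. eventually (\<lambda>n. real (card (A n)) \<le>
            ((1/4 + 1/(pi + 2)^2) powr (-1/2) + \<epsilon>) * sqrt (real n)) at_top"
proof (intro allI impI)
  fix \<epsilon> :: real assume e: "\<epsilon> > 0"
  define C where "C = (1/4 + 1/(pi + 2)^2) powr (-1/2)"
  define rs where "rs = 2/(pi+2)"
  have C2: "C^2 = 4 / (1 + rs^2)" and C0: "C > 0" unfolding C_def rs_def using C_sq by auto
  define D where "D = (C + \<epsilon>)^2"
  define g where "g = 1 + rs^2 - 4/D"
  have sD: "sqrt D = C + \<epsilon>" unfolding D_def using C0 e by simp
  have D0: "D > 0" unfolding D_def using C0 e by simp
  have rs0: "rs \<ge> 0" unfolding rs_def using pi_gt_zero by simp
  have "C^2 < D" unfolding D_def using C0 e by (intro power_strict_mono) auto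
  then have "4 / D < 4 / C^2" using C0 D0 by (intro divide_strict_left_mono) auto
  also have "4 / C^2 = 1 + rs^2" using C2 rs0 by (simp add: field_simps add_pos_nonneg)
  finally have g0: "g > 0" unfolding g_def by simp
  have rs1: "rs \<le> 1" unfolding rs_def using pi_gt_zero by (simp add: divide_le_eq)
  have g2: "g < 2"
  proof -
    have "rs^2 \<le> 1" using rs0 rs1 by (simp add: power_le_one)
    moreover have "4 / D > 0" using D0 by simp
    ultimately show ?thesis unfolding g_def by linarith
  qed
  have gD: "4 / D + g = 1 + rs^2" unfolding g_def by simp
  define \<delta> where "\<delta> = g / 8"
  have d0: "\<delta> > 0" "\<delta> < 1" unfolding \<delta>_def using g0 g2 by auto
  have ev1: "eventually (\<lambda>n. real (card (sumset (A n))) \<ge> (1 - \<delta>) * real (card (A n) choose 2)) at_top"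
  proof -
    have lim: "((\<lambda>n. if real (card (sumset (A n))) = 0 \<and> real (card (A n) choose 2) = 0 then 1
                else real (card (sumset (A n))) / real (card (A n) choose 2)) \<longlongrightarrow> 1) at_top"
      using asymp_equivD[OF quasi_sidon] .
    have "1 - \<delta> < 1" using d0 by simp
    from order_tendstoD(1)[OF lim this]
    show ?thesis
    proof (rule eventually_mono)
      fix n
      assume h: "1 - \<delta> < (if real (card (sumset (A n))) = 0 \<and> real (card (A n) choose 2) = 0 then 1
                else real (card (sumset (A n))) / real (card (A n) choose 2))"
      show "real (card (sumset (A n))) \<ge> (1 - \<delta>) * real (card (A n) choose 2)"
      proof (cases "real (card (sumset (A n))) = 0 \<and> real (card (A n) choose 2) = 0")
        case True then show ?thesis by (metis mult_zero_right order_refl)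
      next
        case False
        have h2: "1 - \<delta> < real (card (sumset (A n))) / real (card (A n) choose 2)"
          using h by (simp only: if_not_P[OF False])
        have "real (card (A n) choose 2) \<noteq> 0"
        proof
          assume "real (card (A n) choose 2) = 0"
          with h2 d0 show False by simp
        qed
        then have "real (card (A n) choose 2) > 0" by simp
        with h2 show ?thesis by (simp add: less_divide_eq less_imp_le)
      qed
    qed
  qed
  define N where "N = nat \<lceil>2 * pi / g + (16 / (g * sqrt D))^2 + 1\<rceil>"
  have ev2: "eventually (\<lambda>n. n \<ge> N) at_top" by (rule eventually_ge_at_top)
  show "eventually (\<lambda>n. real (card (A n)) \<le> (C + \<epsilon>) * sqrt (real n)) at_top"
    using ev1 ev2
  proof (rule eventually_elim2)
    fix n
    assume S: "real (card (sumset (A n))) \<ge> (1 - \<delta>) * real (card (A n) choose 2)" and nN: "n \<ge> N"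
    have nbig: "real n \<ge> 2 * pi / g + (16 / (g * sqrt D))^2 + 1"
      using nN unfolding N_def by linarith
    have pos1: "2 * pi / g \<ge> 0" using g0 pi_gt_zero by simp
    have n1: "real n \<ge> 1" using nbig pos1 by (smt (verit) zero_le_power2)
    then have n0: "n > 0" by simp
    let ?k = "real (card (A n))"
    let ?S = "real (card (sumset (A n)))"
    let ?gam = "cc n 0 / real n"
    have P: "(?gam / (1 + ?gam))^2 * ?k^2 \<le> 4 * real n + ?k^2 - 4 * ?S + 2 * ?k"
      using per_n[OF n0 sub] .
    have ch: "2 * real (card (A n) choose 2) = ?k * (?k - 1)" by (rule choose2_real)
    have "2 * (1 - \<delta>) * (?k * (?k - 1)) = 4 * ((1 - \<delta>) * real (card (A n) choose 2))"
      unfolding ch[symmetric] by (simp add: algebra_simps)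
    then have "4 * ?S \<ge> 2 * (1 - \<delta>) * (?k * (?k - 1))" using S by linarith
    moreover have "2 * (1 - \<delta>) * (?k * (?k - 1)) = 2 * ?k^2 - 2 * (\<delta> * ?k^2) - 2 * ((1 - \<delta>) * ?k)"
      by (simp add: power2_eq_square algebra_simps)
    moreover have "(1 - \<delta>) * ?k = ?k - \<delta> * ?k" by (simp add: algebra_simps)
    moreover have "\<delta> * ?k \<ge> 0" using d0 by simp
    moreover have "(1 - 2*\<delta>) * ?k^2 = ?k^2 - 2 * (\<delta> * ?k^2)" by (simp add: algebra_simps)
    ultimately have main: "(?gam / (1 + ?gam))^2 * ?k^2 \<le> 4 * real n - (1 - 2*\<delta>) * ?k^2 + 4 * ?k"
      using P by linarith
    have gb: "?gam \<ge> 0" "?gam \<ge> 2/pi - pi / (4 * real n ^ 2)" using gamma_bounds[OF n0] by auto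
    have t0: "pi / (4 * real n ^ 2) \<ge> 0" by simp
    have r: "(?gam / (1 + ?gam))^2 \<ge> rs^2 - 2 * (pi / (4 * real n ^ 2))"
      unfolding rs_def using rho_lower[OF gb t0] .
    have "2 * (pi / (4 * real n ^ 2)) \<le> g / 4"
    proof -
      have "real n ^ 2 \<ge> real n" using n1 by (simp add: power2_eq_square)
      moreover have "real n \<ge> 2 * pi / g" using nbig by (smt (verit) zero_le_power2)
      ultimately have nn: "real n ^ 2 \<ge> 2 * pi / g" by linarith
      have "2 * (pi / (4 * real n ^ 2)) = pi / (2 * real n ^ 2)" by simp
      also have "\<dots> \<le> g / 4"
        using nn g0 n1 pi_gt_zero by (simp add: field_simps)
      finally show ?thesis .
    qed
    with r have r2: "(?gam / (1 + ?gam))^2 \<ge> rs^2 - g/4" by linarith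
    have big: "16 / g \<le> sqrt D * sqrt (real n)"
    proof -
      have "real n \<ge> (16 / (g * sqrt D))^2" using nbig pos1 by linarith
      then have "sqrt (real n) \<ge> 16 / (g * sqrt D)" using g0 D0 by (simp add: real_le_rsqrt)
      then have "sqrt D * sqrt (real n) \<ge> sqrt D * (16 / (g * sqrt D))" using D0 by (intro mult_left_mono) auto
      also have "sqrt D * (16 / (g * sqrt D)) = 16 / g" using D0 by simp
      finally show ?thesis .
    qed
    have "?k \<le> sqrt D * sqrt (real n)"
      by (rule final_arith[OF main r2 _ gD g0 D0 big]) (auto simp: \<delta>_def)
    then show "?k \<le> (C + \<epsilon>) * sqrt (real n)" using sD by simp
  qed
qed


end
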